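(* Let $F$ be an infinite field and $n\ge2$. Let $z_1,\dots,z_k$ be distinct variables of nonzero degrees $g_1,\dots,g_k\in\{1,\dots,n-1\}$ with $g_1+\dots+g_k\le n-1$, and let $y_1,\dots,y_k,y$ be variables of degree $0$. Let $f=[z_1,y_1,z_2,y_2,\dots,z_k,y_k]$. Then for every $1\le i\le k$, $$[z_1,y_1,\dots,z_{i-1},y_{i-1},z_i,y,y_i,z_{i+1},y_{i+1},\dots,z_k,y_k]\in\langle\{f\}\cup I\rangle_{T_{\mathbb{Z}_n}}.$$
   Context: $UT_n(F)^{(-)}$: $n\times n$ upper triangular matrices with bracket $[a,b]=ab-ba$ and canonical $\mathbb{Z}_n$-grading (degree-$k$ component spanned by $e_{ij}$ with $j-i=k$); elements of $\mathbb{Z}_n\setminus\{0\}$ are identified with $1,\dots,n-1$. $I$ is its $T_{\mathbb{Z}_n}$-ideal of graded identities in the free $\mathbb{Z}_n$-graded Lie algebra $\mathcal{L}_{\mathbb{Z}_n}$ (countably many variables of each degree). Commutators are left normed; $\langle S\rangle_{T_{\mathbb{Z}_n}}$ is the smallest graded ideal containing $S$ invariant under degree-preserving endomorphisms. *)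

theory Defs
  imports Main
begin

text \<open>Variables of the free Z_n-graded Lie algebra: a variable is a pair (d, j);
  its Z_n-degree is d mod n. Hence there are countably many variables of every degree.
  The free Lie algebra is realised (Witt's theorem) as the Lie subalgebra of Lie
  polynomials inside the free associative algebra F<X>, whose elements are
  functions from words (lists of variables) to F with finite support.\<close>

type_synonym var = "nat \<times> nat"
type_synonym 'a ncpoly = "var list \<Rightarrow> 'a"

definition gdeg :: "nat \<Rightarrow> var \<Rightarrow> nat" where
  "gdeg n x = fst x mod n"

definition wdeg :: "nat \<Rightarrow> var list \<Rightarrow> nat" where
  "wdeg n w = (\<Sum>x\<leftarrow>w. fst x) mod n"

definition pvar :: "var \<Rightarrow> 'a::field ncpoly" where
  "pvar x = (\<lambda>w. if w = [x] then 1 else 0)"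

definition pone :: "'a::field ncpoly" where
  "pone = (\<lambda>w. if w = [] then 1 else 0)"

definition padd :: "'a::field ncpoly \<Rightarrow> 'a ncpoly \<Rightarrow> 'a ncpoly" where
  "padd p q = (\<lambda>w. p w + q w)"

definition psmult :: "'a::field \<Rightarrow> 'a ncpoly \<Rightarrow> 'a ncpoly" where
  "psmult c p = (\<lambda>w. c * p w)"

definition pmul :: "'a::field ncpoly \<Rightarrow> 'a ncpoly \<Rightarrow> 'a ncpoly" where
  "pmul p q = (\<lambda>w. \<Sum>k\<le>length w. p (take k w) * q (drop k w))"

definition pbr :: "'a::field ncpoly \<Rightarrow> 'a ncpoly \<Rightarrow> 'a ncpoly" where
  "pbr p q = (\<lambda>w. pmul p q w - pmul q p w)"

inductive_set LieP :: "'a::field ncpoly set" where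
  LieP_var: "pvar x \<in> LieP"
| LieP_zero: "(\<lambda>w. 0) \<in> LieP"
| LieP_add: "p \<in> LieP \<Longrightarrow> q \<in> LieP \<Longrightarrow> padd p q \<in> LieP"
| LieP_smult: "p \<in> LieP \<Longrightarrow> psmult c p \<in> LieP"
| LieP_br: "p \<in> LieP \<Longrightarrow> q \<in> LieP \<Longrightarrow> pbr p q \<in> LieP"

fun lnc :: "'a::field ncpoly list \<Rightarrow> 'a ncpoly" where
  "lnc [] = (\<lambda>w. 0)"
| "lnc (p # ps) = foldl pbr p ps"

definition hcomp :: "nat \<Rightarrow> nat \<Rightarrow> 'a::field ncpoly \<Rightarrow> 'a ncpoly" where
  "hcomp n d p = (\<lambda>w. if wdeg n w = d then p w else 0)"

fun wprod :: "(var \<Rightarrow> 'a::field ncpoly) \<Rightarrow> var list \<Rightarrow> 'a ncpoly" where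
  "wprod \<sigma> [] = pone"
| "wprod \<sigma> (x # w) = pmul (\<sigma> x) (wprod \<sigma> w)"

definition psubst :: "(var \<Rightarrow> 'a::field ncpoly) \<Rightarrow> 'a ncpoly \<Rightarrow> 'a ncpoly" where
  "psubst \<sigma> p = (\<lambda>u. \<Sum>w\<in>{w. p w \<noteq> 0}. p w * wprod \<sigma> w u)"

definition graded_endo :: "nat \<Rightarrow> (var \<Rightarrow> 'a::field ncpoly) \<Rightarrow> bool" where
  "graded_endo n \<sigma> \<longleftrightarrow> (\<forall>x. \<sigma> x \<in> LieP \<and> hcomp n (gdeg n x) (\<sigma> x) = \<sigma> x)"

definition is_Tideal :: "nat \<Rightarrow> 'a::field ncpoly set \<Rightarrow> bool" where
  "is_Tideal n J \<longleftrightarrow>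
     J \<subseteq> LieP \<and> (\<lambda>w. 0) \<in> J \<and>
     (\<forall>p\<in>J. \<forall>q\<in>J. padd p q \<in> J) \<and>
     (\<forall>p\<in>J. \<forall>c. psmult c p \<in> J) \<and>
     (\<forall>p\<in>J. \<forall>q\<in>LieP. pbr p q \<in> J) \<and>
     (\<forall>p\<in>J. \<forall>d. hcomp n d p \<in> J) \<and>
     (\<forall>p\<in>J. \<forall>\<sigma>. graded_endo n \<sigma> \<longrightarrow> psubst \<sigma> p \<in> J)"

definition Tideal_gen :: "nat \<Rightarrow> 'a::field ncpoly set \<Rightarrow> 'a ncpoly set" where
  "Tideal_gen n S = \<Inter>{J. is_Tideal n J \<and> S \<subseteq> J}"

text \<open>n x n matrices (entries outside {0..<n}^2 are zero); UT_n with canonical grading.\<close>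
type_synonym 'a mat = "nat \<Rightarrow> nat \<Rightarrow> 'a"

definition mmul :: "nat \<Rightarrow> 'a::field mat \<Rightarrow> 'a mat \<Rightarrow> 'a mat" where
  "mmul n A B = (\<lambda>i j. \<Sum>l<n. A i l * B l j)"

definition mone :: "nat \<Rightarrow> 'a::field mat" where
  "mone n = (\<lambda>i j. if i = j \<and> i < n then 1 else 0)"

definition UT_hom :: "nat \<Rightarrow> nat \<Rightarrow> 'a::field mat \<Rightarrow> bool" where
  "UT_hom n k A \<longleftrightarrow> (\<forall>i j. A i j \<noteq> 0 \<longrightarrow> i < n \<and> j < n \<and> i \<le> j \<and> j - i = k)"

definition graded_assign :: "nat \<Rightarrow> (var \<Rightarrow> 'a::field mat) \<Rightarrow> bool" where
  "graded_assign n \<psi> \<longleftrightarrow> (\<forall>x. UT_hom n (gdeg n x) (\<psi> x))"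

fun wmat :: "nat \<Rightarrow> (var \<Rightarrow> 'a::field mat) \<Rightarrow> var list \<Rightarrow> 'a mat" where
  "wmat n \<psi> [] = mone n"
| "wmat n \<psi> (x # w) = mmul n (\<psi> x) (wmat n \<psi> w)"

text \<open>Evaluation of a (Lie) polynomial; the bracket of UT_n^(-) is ab - ba, so the
  associative evaluation of a Lie polynomial equals its Lie evaluation.\<close>
definition meval :: "nat \<Rightarrow> (var \<Rightarrow> 'a::field mat) \<Rightarrow> 'a ncpoly \<Rightarrow> 'a mat" where
  "meval n \<psi> p = (\<lambda>i j. \<Sum>w\<in>{w. p w \<noteq> 0}. p w * wmat n \<psi> w i j)"

definition UT_ids :: "nat \<Rightarrow> 'a::field ncpoly set" where
  "UT_ids n = {p \<in> LieP. \<forall>\<psi>. graded_assign n \<psi> \<longrightarrow> meval n \<psi> p = (\<lambda>i j. 0)}"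

end

theory Submission
  imports Defs
begin

definition shiftp :: "var \<Rightarrow> 'a::field ncpoly \<Rightarrow> 'a ncpoly" where
  "shiftp x p = (\<lambda>u. p (x # u))"

definition psupp :: "'a::field ncpoly \<Rightarrow> var list set" where
  "psupp p = {w. p w \<noteq> 0}"

lemma pmul_Nil: "pmul p q [] = p [] * q []"
  by (simp add: pmul_def)

lemma pmul_Cons: "pmul p q (x # w) = p [] * q (x # w) + pmul (shiftp x p) q w"
  unfolding pmul_def shiftp_def
  by (simp add: sum.atMost_Suc_shift del: sum.atMost_Suc)

lemma pmul_add_left: "pmul (\<lambda>u. f u + g u) h w = pmul f h w + pmul g h w"
  unfolding pmul_def by (simp add: sum.distrib algebra_simps)
lemma pmul_add_right: "pmul h (\<lambda>u. f u + g u) w = pmul h f w + pmul h g w"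
  unfolding pmul_def by (simp add: sum.distrib algebra_simps)
lemma pmul_diff_left: "pmul (\<lambda>u. f u - g u) h w = pmul f h w - pmul g h w"
  unfolding pmul_def by (simp add: sum_subtractf algebra_simps)
lemma pmul_diff_right: "pmul h (\<lambda>u. f u - g u) w = pmul h f w - pmul h g w"
  unfolding pmul_def by (simp add: sum_subtractf algebra_simps)
lemma pmul_smult_left: "pmul (\<lambda>u. a * f u) h w = a * pmul f h w"
  unfolding pmul_def by (simp add: sum_distrib_left algebra_simps)
lemma pmul_zero_left: "pmul (\<lambda>u. 0) h w = 0"
  unfolding pmul_def by simp

lemma pmul_assoc_pt: "pmul (pmul p q) r w = pmul p (pmul q r) w"
proof (induction w arbitrary: p)
  case Nil then show ?case by (simp add: pmul_Nil)
next
  case (Cons x w)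
  have sh: "shiftp x (pmul p q) = (\<lambda>u. p [] * shiftp x q u + pmul (shiftp x p) q u)"
    by (rule ext) (simp add: shiftp_def pmul_Cons)
  have "pmul (pmul p q) r (x # w) = pmul p q [] * r (x#w) + pmul (\<lambda>u. p [] * shiftp x q u + pmul (shiftp x p) q u) r w"
    by (simp only: pmul_Cons sh)
  also have "\<dots> = p [] * q [] * r (x#w) + p [] * pmul (shiftp x q) r w + pmul (pmul (shiftp x p) q) r w"
    by (simp add: pmul_add_left pmul_smult_left pmul_Nil)
  also have "\<dots> = p [] * q [] * r (x#w) + p [] * pmul (shiftp x q) r w + pmul (shiftp x p) (pmul q r) w"
    using Cons.IH by simp
  also have "\<dots> = pmul p (pmul q r) (x # w)"
    by (simp add: pmul_Cons algebra_simps)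
  finally show ?case .
qed

lemma pmul_assoc: "pmul (pmul p q) r = pmul p (pmul q r)"
  by (rule ext) (rule pmul_assoc_pt)

lemma pmul_pone_left: "pmul pone p = p"
proof (rule ext)
  fix w show "pmul pone p w = p w"
  proof (cases w)
    case Nil then show ?thesis by (simp add: pmul_Nil pone_def)
  next
    case (Cons x u)
    have h: "shiftp x pone = (\<lambda>u. 0)" by (rule ext) (simp add: shiftp_def pone_def)
    show ?thesis using Cons by (simp add: pmul_Cons h pmul_zero_left, simp add: pone_def)
  qed
qed

lemma pmul_pone_right_pt: "pmul p pone w = p w"
proof (induction w arbitrary: p)
  case Nil then show ?case by (simp add: pmul_Nil pone_def)
next
  case (Cons x w) then show ?case by (simp add: pmul_Cons pone_def shiftp_def)
qed

lemma wprod_append: "wprod \<sigma> (a @ b) = pmul (wprod \<sigma> a) (wprod \<sigma> b)"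
  by (induction a) (simp_all add: pmul_pone_left pmul_assoc)

lemma pmul_nz: "pmul p q w \<noteq> 0 \<Longrightarrow> \<exists>a b. w = a @ b \<and> p a \<noteq> 0 \<and> q b \<noteq> 0"
  unfolding pmul_def
  by (metis (no_types, lifting) append_take_drop_id mult_eq_0_iff sum.neutral)

lemma fin_pmul: "finite (psupp p) \<Longrightarrow> finite (psupp q) \<Longrightarrow> finite (psupp (pmul p q))"
proof -
  assume a: "finite (psupp p)" "finite (psupp q)"
  have "psupp (pmul p q) \<subseteq> (\<lambda>x. fst x @ snd x) ` (psupp p \<times> psupp q)"
  proof
    fix w assume "w \<in> psupp (pmul p q)"
    then obtain a b where "w = a @ b" "p a \<noteq> 0" "q b \<noteq> 0" using pmul_nz unfolding psupp_def by blast
    then show "w \<in> (\<lambda>x. fst x @ snd x) ` (psupp p \<times> psupp q)"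
      unfolding psupp_def by (auto intro!: image_eqI[of _ _ "(a,b)"])
  qed
  then show ?thesis using a by (meson finite_SigmaI finite_imageI finite_subset)
qed

lemma pmul_pairs:
  assumes "finite A" "finite B" "psupp p \<subseteq> A" "psupp q \<subseteq> B"
  shows "pmul p q w = (\<Sum>x\<in>{x\<in>A \<times> B. fst x @ snd x = w}. p (fst x) * q (snd x))"
proof -
  let ?h = "\<lambda>k. (take k w, drop k w)"
  let ?S = "?h ` {..length w}"
  have inj: "inj_on ?h {..length w}"
    by (rule inj_onI) (metis atMost_iff length_take min.absorb2 prod.inject)
  have "pmul p q w = (\<Sum>x\<in>?S. p (fst x) * q (snd x))"
    unfolding pmul_def by (simp add: sum.reindex[OF inj])
  also have "\<dots> = (\<Sum>x\<in>{x\<in>A \<times> B. fst x @ snd x = w}. p (fst x) * q (snd x))"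
  proof (rule sum.mono_neutral_right)
    show "finite ?S" by simp
    show "{x \<in> A \<times> B. fst x @ snd x = w} \<subseteq> ?S"
    proof
      fix x assume x: "x \<in> {x \<in> A \<times> B. fst x @ snd x = w}"
      then have "x = ?h (length (fst x))" by (cases x) auto
      moreover have "length (fst x) \<le> length w" using x by auto
      ultimately show "x \<in> ?S" by blast
    qed
    show "\<forall>i\<in>?S - {x \<in> A \<times> B. fst x @ snd x = w}. p (fst i) * q (snd i) = 0"
      using assms(3,4) unfolding psupp_def by auto
  qed
  finally show ?thesis .
qed

lemma psubst_eq:
  assumes "finite T" "psupp p \<subseteq> T"
  shows "psubst \<sigma> p u = (\<Sum>w\<in>T. p w * wprod \<sigma> w u)"
  unfolding psubst_def
  by (rule sum.mono_neutral_left) (use assms in \<open>auto simp: psupp_def\<close>)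

lemma pmul_bilin:
  "pmul (\<lambda>v. \<Sum>a\<in>A. c a * f a v) (\<lambda>v. \<Sum>b\<in>B. d b * h b v) u
   = (\<Sum>a\<in>A. \<Sum>b\<in>B. c a * d b * pmul (f a) (h b) u)"
  unfolding pmul_def
  apply (simp add: sum_product sum_distrib_left sum.swap[of _ "{..length u}"] algebra_simps)
  apply (rule sum.cong[OF refl])
  apply (rule sum.swap)
  done

lemma psubst_mul:
  assumes fp: "finite (psupp p)" and fq: "finite (psupp q)"
  shows "psubst \<sigma> (pmul p q) u = pmul (psubst \<sigma> p) (psubst \<sigma> q) u"
proof -
  let ?A = "psupp p" and ?B = "psupp q" and ?W = "wprod \<sigma>"
  let ?g = "\<lambda>x. fst x @ snd x"
  let ?T = "?g ` (?A \<times> ?B)"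
  have fT: "finite ?T" using fp fq by simp
  have sT: "psupp (pmul p q) \<subseteq> ?T"
  proof
    fix w assume "w \<in> psupp (pmul p q)"
    then obtain a b where "w = a @ b" "p a \<noteq> 0" "q b \<noteq> 0" using pmul_nz unfolding psupp_def by blast
    then show "w \<in> ?T" unfolding psupp_def by (auto intro!: image_eqI[of _ _ "(a,b)"])
  qed
  have "psubst \<sigma> (pmul p q) u = (\<Sum>w\<in>?T. pmul p q w * ?W w u)"
    by (rule psubst_eq[OF fT sT])
  also have "\<dots> = (\<Sum>w\<in>?T. \<Sum>x\<in>{x\<in>?A \<times> ?B. ?g x = w}. p (fst x) * q (snd x) * ?W (?g x) u)"
    by (rule sum.cong[OF refl]) (simp add: pmul_pairs[OF fp fq] sum_distrib_right)
  also have "\<dots> = (\<Sum>x\<in>?A \<times> ?B. p (fst x) * q (snd x) * ?W (?g x) u)"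
    by (rule sum.group) (use fp fq in auto)
  also have "\<dots> = (\<Sum>x\<in>?A \<times> ?B. p (fst x) * q (snd x) * pmul (?W (fst x)) (?W (snd x)) u)"
    by (simp add: wprod_append)
  also have "\<dots> = (\<Sum>a\<in>?A. \<Sum>b\<in>?B. p a * q b * pmul (?W a) (?W b) u)"
    by (simp add: sum.cartesian_product split_def)
  also have "\<dots> = pmul (\<lambda>v. \<Sum>a\<in>?A. p a * ?W a v) (\<lambda>v. \<Sum>b\<in>?B. q b * ?W b v) u"
    by (rule pmul_bilin[symmetric])
  also have "(\<lambda>v. \<Sum>a\<in>?A. p a * ?W a v) = psubst \<sigma> p"
    by (rule ext, rule psubst_eq[symmetric]) (use fp in auto)
  also have "(\<lambda>v. \<Sum>b\<in>?B. q b * ?W b v) = psubst \<sigma> q"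
    by (rule ext, rule psubst_eq[symmetric]) (use fq in auto)
  finally show ?thesis .
qed

lemma psubst_diff:
  assumes "finite (psupp f)" "finite (psupp g)"
  shows "psubst \<sigma> (\<lambda>w. f w - g w) u = psubst \<sigma> f u - psubst \<sigma> g u"
proof -
  let ?T = "psupp f \<union> psupp g"
  have "psubst \<sigma> (\<lambda>w. f w - g w) u = (\<Sum>w\<in>?T. (f w - g w) * wprod \<sigma> w u)"
    by (rule psubst_eq) (use assms in \<open>auto simp: psupp_def\<close>)
  also have "\<dots> = (\<Sum>w\<in>?T. f w * wprod \<sigma> w u) - (\<Sum>w\<in>?T. g w * wprod \<sigma> w u)"
    by (simp add: sum_subtractf left_diff_distrib)
  also have "\<dots> = psubst \<sigma> f u - psubst \<sigma> g u"
    using assms by (simp add: psubst_eq[of ?T])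
  finally show ?thesis .
qed

lemma fin_pbr: "finite (psupp p) \<Longrightarrow> finite (psupp q) \<Longrightarrow> finite (psupp (pbr p q))"
proof -
  assume a: "finite (psupp p)" "finite (psupp q)"
  have "psupp (pbr p q) \<subseteq> psupp (pmul p q) \<union> psupp (pmul q p)"
    unfolding psupp_def pbr_def by auto
  then show ?thesis using fin_pmul a by (meson finite_Un finite_subset)
qed

lemma fin_pvar: "finite (psupp (pvar x))"
proof -
  have "psupp (pvar x) \<subseteq> {[x]}" unfolding psupp_def pvar_def by auto
  then show ?thesis by (rule finite_subset) simp
qed

lemma psubst_pbr:
  assumes "finite (psupp p)" "finite (psupp q)"
  shows "psubst \<sigma> (pbr p q) = pbr (psubst \<sigma> p) (psubst \<sigma> q)"
  unfolding pbr_def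
  by (rule ext) (simp add: psubst_diff fin_pmul assms psubst_mul)

lemma psubst_pvar: "psubst \<sigma> (pvar x) = \<sigma> x"
proof (rule ext)
  fix u
  have "psubst \<sigma> (pvar x) u = (\<Sum>w\<in>{[x]}. pvar x w * wprod \<sigma> w u)"
    by (rule psubst_eq) (auto simp: psupp_def pvar_def)
  then show "psubst \<sigma> (pvar x) u = \<sigma> x u"
    by (simp add: pvar_def pmul_pone_right_pt)
qed

lemma psubst_foldl:
  "finite (psupp p) \<Longrightarrow> \<forall>q\<in>set ps. finite (psupp q) \<Longrightarrow>
   psubst \<sigma> (foldl pbr p ps) = foldl pbr (psubst \<sigma> p) (map (psubst \<sigma>) ps)"
  by (induction ps arbitrary: p) (simp_all add: psubst_pbr fin_pbr)

lemma pbr_padd_left: "pbr (padd p q) r = padd (pbr p r) (pbr q r)"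
  unfolding pbr_def padd_def
  by (rule ext) (simp add: pmul_add_left pmul_add_right)

lemma pbr_jacobi: "pbr (pbr a b) c = padd (pbr (pbr a c) b) (pbr a (pbr b c))"
  unfolding pbr_def padd_def
  by (rule ext) (simp add: pmul_diff_left pmul_diff_right pmul_assoc_pt)

lemma foldl_padd: "foldl pbr (padd p q) B = padd (foldl pbr p B) (foldl pbr q B)"
  by (induction B arbitrary: p q) (simp_all add: pbr_padd_left)

lemma deriv_fold:
  assumes add: "\<And>p q. p \<in> J \<Longrightarrow> q \<in> J \<Longrightarrow> padd p q \<in> J"
  shows "(\<forall>j < Suc (length as). lnc ((a0 # as)[j := pbr ((a0 # as) ! j) c] @ B) \<in> J)
         \<Longrightarrow> foldl pbr (pbr (foldl pbr a0 as) c) B \<in> J"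
proof (induction as arbitrary: B rule: rev_induct)
  case Nil
  from Nil.prems have "lnc ([a0][0 := pbr ([a0] ! 0) c] @ B) \<in> J" by blast
  then show ?case by simp
next
  case (snoc x as)
  let ?F = "foldl pbr a0 as"
  have eq: "foldl pbr (pbr (foldl pbr a0 (as @ [x])) c) B
        = padd (foldl pbr (pbr ?F c) (x # B)) (foldl pbr ?F (pbr x c # B))"
    by (simp only: foldl_append foldl.simps pbr_jacobi[of ?F x c] foldl_padd)
  have h1: "foldl pbr (pbr ?F c) (x # B) \<in> J"
  proof (rule snoc.IH, intro allI impI)
    fix j assume j: "j < Suc (length as)"
    have "(a0 # as @ [x])[j := pbr ((a0 # as @ [x]) ! j) c] = (a0 # as)[j := pbr ((a0 # as) ! j) c] @ [x]"
      using j by (cases j) (simp_all add: list_update_append1 nth_append)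
    then show "lnc ((a0 # as)[j := pbr ((a0 # as) ! j) c] @ x # B) \<in> J"
      using snoc.prems[rule_format, of j] j by simp
  qed
  have "(a0 # as @ [x])[Suc (length as) := pbr ((a0 # as @ [x]) ! Suc (length as)) c] = a0 # as @ [pbr x c]"
    by (simp add: list_update_append nth_append)
  then have h2: "foldl pbr ?F (pbr x c # B) \<in> J"
    using snoc.prems[rule_format, of "Suc (length as)"] by simp
  show ?case using eq h1 h2 add by simp
qed

lemma G2:
  assumes add: "\<And>p q. p \<in> J \<Longrightarrow> q \<in> J \<Longrightarrow> padd p q \<in> J"
    and m: "0 < m" "m \<le> length L"
    and hyp: "\<forall>j < m. lnc (L[j := pbr (L ! j) c]) \<in> J"
  shows "lnc (take m L @ c # drop m L) \<in> J"
proof -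
  obtain a0 as where tk: "take m L = a0 # as"
    using m by (cases "take m L") auto
  have len: "length (take m L) = m" using m by simp
  have "foldl pbr (pbr (foldl pbr a0 as) c) (drop m L) \<in> J"
  proof (rule deriv_fold[OF add])
    show "\<forall>j < Suc (length as). lnc ((a0 # as)[j := pbr ((a0 # as) ! j) c] @ drop m L) \<in> J"
    proof (intro allI impI)
    fix j assume j: "j < Suc (length as)"
    then have jm: "j < m" using len tk by simp
    have e0: "(take m L @ drop m L)[j := pbr ((take m L @ drop m L) ! j) c] = (take m L)[j := pbr ((take m L) ! j) c] @ drop m L"
      using jm len by (simp add: list_update_append1 nth_append del: append_take_drop_id)
    then have "L[j := pbr (L ! j) c] = (take m L)[j := pbr ((take m L) ! j) c] @ drop m L"
      by (simp only: append_take_drop_id)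
    then have e: "L[j := pbr (L ! j) c] = (a0 # as)[j := pbr ((a0 # as) ! j) c] @ drop m L"
      by (simp only: tk)
    show "lnc ((a0 # as)[j := pbr ((a0 # as) ! j) c] @ drop m L) \<in> J"
      unfolding e[symmetric] using hyp jm by blast
    qed
  qed
  then show ?thesis using tk by simp
qed

definition sig :: "var \<Rightarrow> var \<Rightarrow> var \<Rightarrow> 'a::field ncpoly" where
  "sig v y = (\<lambda>u. if u = v then pbr (pvar v) (pvar y) else pvar u)"

lemma pvar_nz: "pvar x w \<noteq> 0 \<Longrightarrow> w = [x]"
  by (simp add: pvar_def split: if_splits)

lemma graded_sig:
  assumes "gdeg n y = 0"
  shows "graded_endo n (sig v y :: var \<Rightarrow> 'a::field ncpoly)"
  unfolding graded_endo_def
proof (intro allI conjI)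
  fix x
  show "sig v y x \<in> (LieP :: 'a ncpoly set)"
    unfolding sig_def by (auto intro: LieP.intros)
  have hv: "hcomp n (gdeg n x) (pvar x :: 'a ncpoly) = pvar x"
    by (rule ext) (auto simp: hcomp_def pvar_def wdeg_def gdeg_def)
  have yy: "fst y mod n = 0" using assms by (simp add: gdeg_def)
  have d1: "wdeg n [v, y] = gdeg n v" "wdeg n [y, v] = gdeg n v"
  proof -
    have "(fst v + fst y) mod n = fst v mod n" using yy by (metis add.right_neutral mod_add_right_eq)
    then show "wdeg n [v, y] = gdeg n v" "wdeg n [y, v] = gdeg n v"
      by (simp_all add: wdeg_def gdeg_def add.commute)
  qed
  have hb: "hcomp n (gdeg n v) (pbr (pvar v) (pvar y) :: 'a ncpoly) = pbr (pvar v) (pvar y)"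
  proof (rule ext)
    fix w
    show "hcomp n (gdeg n v) (pbr (pvar v) (pvar y) :: 'a ncpoly) w = pbr (pvar v) (pvar y) w"
    proof (cases "pbr (pvar v) (pvar y) w = (0::'a)")
      case True then show ?thesis by (simp add: hcomp_def)
    next
      case False
      then have "pmul (pvar v) (pvar y) w \<noteq> (0::'a) \<or> pmul (pvar y) (pvar v) w \<noteq> (0::'a)"
        unfolding pbr_def by auto
      then have "w = [v, y] \<or> w = [y, v]"
        by (auto dest!: pmul_nz pvar_nz)
      then show ?thesis using d1 by (auto simp: hcomp_def)
    qed
  qed
  show "hcomp n (gdeg n x) (sig v y x) = (sig v y x :: 'a ncpoly)"
    unfolding sig_def using hv hb by auto
qed

lemma map_sig:
  assumes "distinct vs" "j < length vs"
  shows "map (sig (vs ! j) y :: var \<Rightarrow> 'a::field ncpoly) vs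
         = (map pvar vs)[j := pbr ((map pvar vs) ! j) (pvar y)]"
  by (rule nth_equalityI) (use assms in \<open>auto simp: sig_def nth_eq_iff_index_eq\<close>)

lemma len_pairs: "length (concat (map (\<lambda>j. [a j, b j]) xs)) = 2 * length xs"
  by (induction xs) auto

lemma split_pairs:
  assumes "1 \<le> i" "i \<le> k"
  shows "concat (map (\<lambda>j. if j = i then [a j, c, b j] else [a j, b j]) [1..<k+1])
       = take (2*i-1) (concat (map (\<lambda>j. [a j, b j]) [1..<k+1])) @ c #
         drop (2*i-1) (concat (map (\<lambda>j. [a j, b j]) [1..<k+1]))"
proof -
  have u1: "[1..<k+1] = [1..<i] @ [i..<k+1]" using upt_add_eq_append[of 1 i "k+1-i"] assms by simp
  have u2: "[i..<k+1] = i # [i+1..<k+1]" using assms by (simp add: upt_conv_Cons)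
  have u: "[1..<k+1] = [1..<i] @ i # [i+1..<k+1]" using u1 u2 by simp
  have p: "map (\<lambda>j. if j = i then [a j, c, b j] else [a j, b j]) [1..<i] = map (\<lambda>j. [a j, b j]) [1..<i]"
    by simp
  have q: "map (\<lambda>j. if j = i then [a j, c, b j] else [a j, b j]) [i+1..<k+1] = map (\<lambda>j. [a j, b j]) [i+1..<k+1]"
    by simp
  let ?P = "concat (map (\<lambda>j. [a j, b j]) [1..<i])"
  have lp: "length ?P = 2*i - 2" using len_pairs[of a b "[1..<i]"] by simp
  have e: "2*i-1 = length ?P + 1" using lp assms by simp
  let ?R = "concat (map (\<lambda>j. [a j, b j]) [i+1..<k+1])"
  have L: "concat (map (\<lambda>j. if j = i then [a j, c, b j] else [a j, b j]) [1..<k+1]) = ?P @ [a i, c, b i] @ ?R"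
    unfolding u map_append concat_append p list.map(2) concat.simps(2) q by simp
  have R: "concat (map (\<lambda>j. [a j, b j]) [1..<k+1]) = ?P @ [a i, b i] @ ?R"
    unfolding u by simp
  show ?thesis unfolding L R e by simp
qed

lemma distinct_pairs:
  "inj_on a {1..k} \<Longrightarrow> inj_on b {1..k} \<Longrightarrow> (\<forall>j\<in>{1..k}. \<forall>l\<in>{1..k}. a j \<noteq> b l)
   \<Longrightarrow> distinct (concat (map (\<lambda>j. [a j, b j]) [1..<k+1]))"
proof (induction k)
  case 0 then show ?case by simp
next
  case (Suc k)
  have s: "{1..k} \<subseteq> {1..Suc k}" by auto
  have IH: "distinct (concat (map (\<lambda>j. [a j, b j]) [1..<k+1]))"
    using Suc.IH Suc.prems inj_on_subset[OF _ s] s by blast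
  have "a (Suc k) \<notin> a ` {1..k}" using inj_on_image_mem_iff[OF Suc.prems(1), of "Suc k" "{1..k}"] by auto
  moreover have "b (Suc k) \<notin> b ` {1..k}" using inj_on_image_mem_iff[OF Suc.prems(2), of "Suc k" "{1..k}"] by auto
  moreover have "a (Suc k) \<notin> b ` {1..k}" "b (Suc k) \<notin> a ` {1..k}" "a (Suc k) \<noteq> b (Suc k)"
    using Suc.prems(3) by force+
  ultimately have nots: "a (Suc k) \<notin> a ` {1..k}" "b (Suc k) \<notin> b ` {1..k}"
      "a (Suc k) \<notin> b ` {1..k}" "b (Suc k) \<notin> a ` {1..k}" "a (Suc k) \<noteq> b (Suc k)" by blast+
  have st: "set (concat (map (\<lambda>j. [a j, b j]) [1..<k+1])) = a ` {1..k} \<union> b ` {1..k}"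
    by (auto simp: atLeastLessThanSuc_atLeastAtMost)
  have disj: "set (concat (map (\<lambda>j. [a j, b j]) [1..<k+1])) \<inter> set [a (Suc k), b (Suc k)] = {}"
    unfolding st using nots by auto
  have d2: "distinct [a (Suc k), b (Suc k)]" using nots by simp
  have eq: "concat (map (\<lambda>j. [a j, b j]) [1..<Suc k+1]) = concat (map (\<lambda>j. [a j, b j]) [1..<k+1]) @ [a (Suc k), b (Suc k)]"
    by simp
  show ?case unfolding eq distinct_append using IH d2 disj by blast
qed

theorem mainTheorem12:
  fixes n k :: nat
    and g :: "nat \<Rightarrow> nat"
    and z yv :: "nat \<Rightarrow> var"
    and y :: var
    and i :: nat
  assumes "infinite (UNIV :: 'a::field set)"
    and "n \<ge> 2"
    and "\<forall>j\<in>{1..k}. g j \<in> {1..n-1} \<and> gdeg n (z j) = g j"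
    and "inj_on z {1..k}"
    and "(\<Sum>j=1..k. g j) \<le> n - 1"
    and "\<forall>j\<in>{1..k}. gdeg n (yv j) = 0"
    and "gdeg n y = 0"
    and "inj_on yv {1..k}" and "y \<notin> yv ` {1..k}"
    and "1 \<le> i" and "i \<le> k"
  shows "lnc (concat (map (\<lambda>j. if j = i then [pvar (z j), pvar y, pvar (yv j)]
                                 else [pvar (z j), pvar (yv j)]) [1..<k+1]))
         \<in> Tideal_gen n (insert (lnc (concat (map (\<lambda>j. [pvar (z j), pvar (yv j)]) [1..<k+1])))
                              (UT_ids n) :: 'a ncpoly set)"
proof -
  define vs where "vs = concat (map (\<lambda>j. [z j, yv j]) [1..<k+1])"
  define L :: "'a ncpoly list" where "L = map pvar vs"
  have LL: "concat (map (\<lambda>j. [pvar (z j), pvar (yv j)]) [1..<k+1]) = L"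
    unfolding L_def vs_def by (simp add: map_concat comp_def)
  have tdef: "concat (map (\<lambda>j. if j = i then [pvar (z j), pvar y, pvar (yv j)] else [pvar (z j), pvar (yv j)]) [1..<k+1])
      = take (2*i-1) L @ pvar y # drop (2*i-1) L"
    using split_pairs[OF assms(10,11), of "\<lambda>j. pvar (z j) :: 'a ncpoly" "pvar y" "\<lambda>j. pvar (yv j)"] by (simp only: LL)
  have lenvs: "length vs = 2 * k" unfolding vs_def using len_pairs[of z yv "[1..<k+1]"] by (simp del: upt_Suc)
  have dvs: "distinct vs" unfolding vs_def
  proof (rule distinct_pairs[OF assms(4) assms(8)])
    show "\<forall>j\<in>{1..k}. \<forall>l\<in>{1..k}. z j \<noteq> yv l"
    proof (intro ballI)
      fix j l assume "j \<in> {1..k}" "l \<in> {1..k}"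
      then have "gdeg n (z j) \<ge> 1" "gdeg n (yv l) = 0" using assms(3,6) by auto
      then show "z j \<noteq> yv l" by auto
    qed
  qed
  obtain x0 xs where vsc: "vs = x0 # xs" using lenvs assms(10,11) by (cases vs) auto
  show ?thesis
    unfolding Tideal_gen_def LL tdef
  proof (rule InterI)
    fix J :: "'a ncpoly set" assume "J \<in> {J. is_Tideal n J \<and> insert (lnc L) (UT_ids n) \<subseteq> J}"
    then have TJ: "is_Tideal n J" and fJ: "lnc L \<in> J" by auto
    have add: "\<And>p q. p \<in> J \<Longrightarrow> q \<in> J \<Longrightarrow> padd p q \<in> J" using TJ unfolding is_Tideal_def by blast
    have sub: "\<And>p \<sigma>. p \<in> J \<Longrightarrow> graded_endo n \<sigma> \<Longrightarrow> psubst \<sigma> p \<in> J" using TJ unfolding is_Tideal_def by blast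
    show "lnc (take (2*i-1) L @ pvar y # drop (2*i-1) L) \<in> J"
    proof (rule G2[OF add])
      show "0 < 2*i-1" using assms(10) by simp
      show "2*i-1 \<le> length L" using assms(11) lenvs L_def by simp
      show "\<forall>j<2 * i - 1. lnc (L[j := pbr (L ! j) (pvar y)]) \<in> J"
      proof (intro allI impI)
        fix j assume j: "j < 2*i-1"
        then have jl: "j < length vs" using assms(11) lenvs by simp
        have "psubst (sig (vs ! j) y) (lnc L) \<in> J"
          by (rule sub[OF fJ graded_sig[OF assms(7)]])
        moreover have "psubst (sig (vs ! j) y) (lnc L) = lnc (map (sig (vs ! j) y) vs)"
          unfolding L_def vsc by (simp add: psubst_foldl fin_pvar psubst_pvar comp_def)
        moreover have "map (sig (vs ! j) y) vs = L[j := pbr (L ! j) (pvar y)]"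
          unfolding L_def by (rule map_sig[OF dvs jl])
        ultimately show "lnc (L[j := pbr (L ! j) (pvar y)]) \<in> J" by simp
      qed
    qed
  qed
qed

end
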